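(* Let $\delta>0$, let $Z\in\mathbb{R}^{N\times r}$ with $\operatorname{rank}(Z)=r$, and let $Z=U\Lambda V$ be its compact singular value decomposition, where $U\in\mathbb{R}^{N\times r}$ has orthonormal columns, $\Lambda\in\mathbb{R}^{r\times r}$ is diagonal with positive diagonal entries, and $V\in\mathbb{R}^{r\times r}$ is orthogonal. Then the Euclidean gradient of $F_\delta$ at $Z$ is $$\nabla F_\delta(Z)=(I_N-UU^T)\,D_\delta(UV)\,U\Lambda^{-1}V.$$
   Context: The Huber function is $H_\delta(x)=x-\delta/2$ for $x\ge\delta$ and $H_\delta(x)=x^2/(2\delta)$ for $0\le x<\delta$; its derivative is $H_\delta'(x)=1$ for $x\ge\delta$ and $H_\delta'(x)=x/\delta$ for $0\le x<\delta$. For $Z\in\mathbb{R}^{N\times r}$ of rank $r$, $F_\delta(Z)=\sum_{n=1}^N\big[H_\delta(\|(Z(Z^TZ)^{-1/2})[n]\|_2)+\delta/2\big]$, where $(\cdot)[n]$ denotes the $n$-th row. $I_N$ is the $N\times N$ identity matrix. For $W\in\mathbb{R}^{N\times r}$, $D_\delta(W)$ is the $N\times N$ diagonal matrix with $D_\delta(W)_{i,i}=H_\delta'(\|W[i,:]\|_2)/\|W[i,:]\|_2$ if the $i$-th row $W[i,:]$ is non-zero and $D_\delta(W)_{i,i}=0$ otherwise. *)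

theory Defs
  imports "HOL-Analysis.Analysis"
begin

text \<open>Matrices in R^(N x r) are represented as real^'r^'n (row index 'n, column index 'r);
  the n-th row of M is M $ n.\<close>

definition huber :: "real \<Rightarrow> real \<Rightarrow> real" where
  "huber \<delta> x = (if x \<ge> \<delta> then x - \<delta> / 2 else x\<^sup>2 / (2 * \<delta>))"

definition huber_deriv :: "real \<Rightarrow> real \<Rightarrow> real" where
  "huber_deriv \<delta> x = (if x \<ge> \<delta> then 1 else x / \<delta>)"

definition pos_def_matrix :: "real^'r^'r \<Rightarrow> bool" where
  "pos_def_matrix S \<longleftrightarrow> (\<forall>x. x \<noteq> 0 \<longrightarrow> x \<bullet> (S *v x) > 0)"

definition mat_inv_sqrt :: "real^'r^'r \<Rightarrow> real^'r^'r" where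
  "mat_inv_sqrt A = (THE S. transpose S = S \<and> pos_def_matrix S \<and> S ** S = matrix_inv A)"

definition F_huber :: "real \<Rightarrow> real^'r^'n \<Rightarrow> real" where
  "F_huber \<delta> Z = (let W = Z ** mat_inv_sqrt (transpose Z ** Z) in
     (\<Sum>n\<in>UNIV. huber \<delta> (norm (W $ n)) + \<delta> / 2))"

definition D_huber :: "real \<Rightarrow> real^'r^'n \<Rightarrow> real^'n^'n" where
  "D_huber \<delta> W = (\<chi> i j. if i = j \<and> W $ i \<noteq> 0
      then huber_deriv \<delta> (norm (W $ i)) / norm (W $ i) else 0)"

end

theory Submission
  imports Defs
begin

lemma bb_mm: "bounded_bilinear (\<lambda>(A::real^'m^'n) (B::real^'k^'m). A ** B)"
  unfolding bilinear_conv_bounded_bilinear[symmetric] bilinear_def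
  by (auto intro!: linearI simp: vec_eq_iff matrix_matrix_mult_def sum.distrib algebra_simps sum_distrib_left)
lemma bb_mv: "bounded_bilinear (\<lambda>(A::real^'m^'n) (x::real^'m). A *v x)"
  unfolding bilinear_conv_bounded_bilinear[symmetric] bilinear_def
  by (auto intro!: linearI simp: vec_eq_iff matrix_vector_mult_def sum.distrib algebra_simps sum_distrib_left)

lemmas mm_add_left = bounded_bilinear.add_left[OF bb_mm]
lemmas mm_add_right = bounded_bilinear.add_right[OF bb_mm]
lemmas mm_diff_left = bounded_bilinear.diff_left[OF bb_mm]
lemmas mm_diff_right = bounded_bilinear.diff_right[OF bb_mm]
lemmas mm_minus_left = bounded_bilinear.minus_left[OF bb_mm]
lemmas mm_minus_right = bounded_bilinear.minus_right[OF bb_mm]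
lemmas mv_add_left = bounded_bilinear.add_left[OF bb_mv]
lemmas mv_add_right = bounded_bilinear.add_right[OF bb_mv]
lemmas mv_diff_left = bounded_bilinear.diff_left[OF bb_mv]
lemmas mv_diff_right = bounded_bilinear.diff_right[OF bb_mv]

lemma minv: "invertible A \<Longrightarrow> A ** matrix_inv A = mat 1 \<and> matrix_inv A ** A = mat 1"
  unfolding invertible_def matrix_inv_def by (rule someI_ex)

lemma minv_unique:
  fixes A X :: "real^'n^'n"
  assumes "A ** X = mat 1" shows "matrix_inv A = X"
proof -
  have "invertible A" using assms invertible_right_inverse by blast
  then have "matrix_inv A ** A = mat 1" using minv by blast
  then have "matrix_inv A ** (A ** X) = X" by (simp add: matrix_mul_assoc)
  then show ?thesis using assms by simp
qed

lemma inv_near: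
  fixes A :: "real^'n^'n" assumes "invertible A"
  obtains d K where "d>0" "K>0"
    "\<And>B. norm (B - A) < d \<Longrightarrow> invertible B \<and>
       norm (matrix_inv B - matrix_inv A + matrix_inv A ** (B - A) ** matrix_inv A) \<le> K * (norm (B - A))\<^sup>2"
proof -
  obtain Kb where Kb: "Kb > 0" "\<And>(X::real^'n^'n) (Y::real^'n^'n). norm (X ** Y) \<le> norm X * norm Y * Kb"
    using bounded_bilinear.pos_bounded[OF bb_mm] by blast
  obtain Kv where Kv: "Kv > 0" "\<And>(X::real^'n^'n) (y::real^'n). norm (X *v y) \<le> norm X * norm y * Kv"
    using bounded_bilinear.pos_bounded[OF bb_mv] by blast
  define Ai where "Ai = matrix_inv A"
  define a where "a = norm Ai + 1"
  have a: "a > 0" "norm Ai \<le> a" unfolding a_def using norm_ge_zero[of Ai] by linarith+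
  define d where "d = 1 / (2 * a * Kb * (Kb + Kv))"
  have d: "d > 0" using a Kb Kv by (simp add: d_def)
  have AiA: "Ai ** A = mat 1" "A ** Ai = mat 1"
    using assms using minv[OF assms] by (auto simp: Ai_def)
  show ?thesis
  proof (rule that[OF d, of "2 * a * a * a * Kb * Kb * Kb * Kb"])
    show "2 * a * a * a * Kb * Kb * Kb * Kb > 0" using a Kb by simp
    fix B :: "real^'n^'n" assume B: "norm (B - A) < d"
    define E where "E = B - A"
    define N where "N = Ai ** E"
    have nN: "norm N \<le> a * norm E * Kb"
      unfolding N_def by (rule order_trans[OF Kb(2)]) (use a Kb in \<open>auto intro!: mult_right_mono\<close>)
    have pos: "a * Kb * (Kb + Kv) > 0" using a Kb Kv by simp
    have "norm E * (a * Kb * (Kb + Kv)) < d * (a * Kb * (Kb + Kv))"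
      using B pos unfolding E_def by (rule mult_strict_right_mono)
    also have "d * (a * Kb * (Kb + Kv)) = 1/2" unfolding d_def using a Kb Kv by simp
    finally have lt: "a * norm E * Kb * (Kb + Kv) < 1/2" by (simp add: ac_simps)
    have "norm N * (Kb + Kv) \<le> a * norm E * Kb * (Kb + Kv)"
      using nN Kb Kv by (intro mult_right_mono) auto
    then have small: "norm N * (Kb + Kv) < 1/2" using lt by linarith
    have "norm N * Kb \<le> norm N * (Kb + Kv)" "norm N * Kv \<le> norm N * (Kb + Kv)"
      using Kb Kv by (auto intro!: mult_left_mono)
    then have NKb: "norm N * Kb \<le> 1/2" "norm N * Kv < 1" using small by linarith+
    have AiB: "Ai ** B = mat 1 + N"
      by (simp add: N_def E_def mm_diff_right AiA)
    have "\<forall>x. B *v x = 0 \<longrightarrow> x = 0"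
    proof (intro allI impI)
      fix x assume "B *v x = 0"
      then have "(Ai ** B) *v x = 0" by (simp add: matrix_vector_mul_assoc[symmetric])
      then have "x + N *v x = 0" by (simp add: AiB mv_add_left)
      then have "x = - (N *v x)" by (simp add: eq_neg_iff_add_eq_0)
      then have "norm x = norm (N *v x)" by (metis norm_minus_cancel)
      then have "norm x \<le> norm N * norm x * Kv" using Kv(2)[of N x] by simp
      then have "norm x * (1 - norm N * Kv) \<le> 0" by (simp add: algebra_simps)
      moreover have "1 - norm N * Kv > 0" using NKb(2) by linarith
      ultimately have "norm x \<le> 0"
        by (metis mult_le_0_iff not_le)
      then show "x = 0" by simp
    qed
    then have invB: "invertible B"
      using matrix_left_invertible_ker invertible_left_inverse by blast
    define Bi where "Bi = matrix_inv B"
    have BiB: "Bi ** B = mat 1" "B ** Bi = mat 1"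
      using invB using minv[OF invB] by (auto simp: Bi_def)
    have eq1: "Bi + N ** Bi = Ai"
    proof -
      have "Ai ** B ** Bi = Ai" by (simp add: matrix_mul_assoc[symmetric] BiB)
      then show ?thesis by (simp add: AiB mm_add_left)
    qed
    have "Bi = Ai - N ** Bi" using eq1 by (simp add: algebra_simps)
    then have "norm Bi \<le> norm Ai + norm (N ** Bi)"
      by (metis norm_triangle_ineq4)
    also have "norm (N ** Bi) \<le> norm N * norm Bi * Kb" by (rule Kb(2))
    also have "\<dots> = (norm N * Kb) * norm Bi" by simp
    also have "\<dots> \<le> 1/2 * norm Bi" using NKb(1) by (intro mult_right_mono) auto
    finally have nBi: "norm Bi \<le> 2 * a" using a by simp
    have eq2: "Bi - Ai + Ai ** E ** Ai = N ** (N ** Bi)"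
    proof -
      have "Bi - Ai = - (N ** Bi)" using eq1 by (simp add: algebra_simps)
      then have "Bi - Ai + N ** Ai = N ** Ai - N ** Bi" by simp
      also have "\<dots> = N ** (Ai - Bi)" by (simp add: mm_diff_right)
      also have "Ai - Bi = N ** Bi" using eq1 by (simp add: algebra_simps)
      finally show ?thesis by (simp add: N_def)
    qed
    have "norm (N ** (N ** Bi)) \<le> norm N * norm (N ** Bi) * Kb" by (rule Kb(2))
    also have "\<dots> \<le> norm N * (norm N * norm Bi * Kb) * Kb"
      by (intro mult_right_mono mult_left_mono Kb(2)) (use Kb in auto)
    also have "\<dots> \<le> (a * norm E * Kb) * ((a * norm E * Kb) * (2 * a) * Kb) * Kb"
      using nN nBi Kb a by (intro mult_right_mono mult_mono) auto
    also have "\<dots> = 2 * a * a * a * Kb * Kb * Kb * Kb * (norm E)\<^sup>2"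
      by (simp add: power2_eq_square)
    finally show "invertible B \<and> norm (matrix_inv B - matrix_inv A + matrix_inv A ** (B - A) ** matrix_inv A)
         \<le> 2 * a * a * a * Kb * Kb * Kb * Kb * (norm (B - A))\<^sup>2"
      using invB eq2 by (simp add: Ai_def Bi_def E_def)
  qed
qed
lemma minv_deriv:
  fixes A :: "real^'n^'n" assumes "invertible A"
  shows "(matrix_inv has_derivative (\<lambda>E. - (matrix_inv A ** E ** matrix_inv A))) (at A)"
proof -
  obtain d K where dK: "d>0" "K>0"
    "\<And>B. norm (B - A) < d \<Longrightarrow> invertible B \<and>
       norm (matrix_inv B - matrix_inv A + matrix_inv A ** (B - A) ** matrix_inv A) \<le> K * (norm (B - A))\<^sup>2"
    using inv_near[OF assms] by blast
  have lin: "linear (\<lambda>E. - (matrix_inv A ** E ** matrix_inv A))"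
    by (intro linearI) (simp_all add: mm_add_left mm_add_right bounded_bilinear.scaleR_left[OF bb_mm] bounded_bilinear.scaleR_right[OF bb_mm])
  show ?thesis
    unfolding has_derivative_at_alt
  proof (intro conjI allI impI)
    show "bounded_linear (\<lambda>E. - (matrix_inv A ** E ** matrix_inv A))"
      using lin linear_conv_bounded_linear by blast
    fix e :: real assume e: "e > 0"
    show "\<exists>d>0. \<forall>y. norm (y - A) < d \<longrightarrow>
      norm (matrix_inv y - matrix_inv A - - (matrix_inv A ** (y - A) ** matrix_inv A)) \<le> e * norm (y - A)"
    proof (intro exI[of _ "min d (e / K)"] conjI allI impI)
      show "min d (e / K) > 0" using dK e by simp
      fix y :: "real^'n^'n" assume y: "norm (y - A) < min d (e / K)"
      have "norm (matrix_inv y - matrix_inv A - - (matrix_inv A ** (y - A) ** matrix_inv A)) \<le> K * (norm (y - A))\<^sup>2"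
        using dK(3)[of y] y by simp
      also have "\<dots> = (K * norm (y - A)) * norm (y - A)" by (simp add: power2_eq_square)
      also have "\<dots> \<le> e * norm (y - A)"
      proof (rule mult_right_mono)
        have "norm (y - A) < e / K" using y by simp
        then show "K * norm (y - A) \<le> e" using dK(2) by (simp add: field_simps)
      qed simp
      finally show "norm (matrix_inv y - matrix_inv A - - (matrix_inv A ** (y - A) ** matrix_inv A)) \<le> e * norm (y - A)" .
    qed
  qed
qed



lemma mv_inner: "((A::real^'m^'n) *v x) \<bullet> y = x \<bullet> (transpose A *v y)"
  by (simp add: inner_vec_def matrix_vector_mult_def transpose_def sum_distrib_left sum_distrib_right mult_ac)
     (rule sum.swap)

lemma row_mm: "((A::real^'m^'n) ** (B::real^'k^'m)) $ n = transpose B *v (A $ n)"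
  by (simp add: vec_eq_iff matrix_matrix_mult_def matrix_vector_mult_def transpose_def mult.commute)

lemma sym_entry: "transpose X = X \<Longrightarrow> X $ a $ b = X $ b $ a"
  by (metis transpose_def vec_lambda_beta)

lemma linear_transpose: "linear (transpose :: real^'m^'n \<Rightarrow> real^'n^'m)"
  by (intro linearI) (simp_all add: vec_eq_iff transpose_def)

lemma diag_quad:
  fixes X S :: "real^'r^'r"
  assumes "transpose X = X"
  shows "(X ** (S ** X)) $ j $ j = X $ j \<bullet> (S *v X $ j)"
  using sym_entry[OF assms]
  by (simp add: matrix_matrix_mult_def matrix_vector_mult_def inner_vec_def sum_distrib_left)

lemma sqrt_unique:
  fixes S T :: "real^'r^'r"
  assumes sS: "transpose S = S" and sT: "transpose T = T"
    and pS: "pos_def_matrix S" and pT: "pos_def_matrix T" and eq: "S ** S = T ** T"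
  shows "S = T"
proof -
  define X where "X = S - T"
  have sX: "transpose X = X"
    unfolding X_def using sS sT by (simp add: vec_eq_iff transpose_def)
  have "S ** X + X ** T = 0"
    unfolding X_def by (simp add: mm_diff_left mm_diff_right eq)
  then have "X ** (S ** X + X ** T) = 0" by (simp add: bounded_bilinear.zero_right[OF bb_mm])
  then have "X ** (S ** X) + X ** (X ** T) = 0" by (simp add: mm_add_right)
  then have "trace (X ** (S ** X)) + trace (X ** (X ** T)) = 0" by (metis trace_add trace_0 mat_0)
  moreover have "trace (X ** (X ** T)) = trace (X ** (T ** X))"
    by (metis trace_mul_sym matrix_mul_assoc)
  ultimately have "(\<Sum>j\<in>UNIV. X $ j \<bullet> (S *v X $ j) + X $ j \<bullet> (T *v X $ j)) = 0"
    by (simp add: trace_def diag_quad[OF sX] sum.distrib)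
  moreover have nn: "\<And>j. X $ j \<bullet> (S *v X $ j) + X $ j \<bullet> (T *v X $ j) \<ge> 0"
    using pS pT unfolding pos_def_matrix_def
    by (metis add_nonneg_nonneg inner_zero_left less_eq_real_def)
  ultimately have z: "\<And>j. X $ j \<bullet> (S *v X $ j) + X $ j \<bullet> (T *v X $ j) = 0"
    by (simp add: sum_nonneg_eq_0_iff)
  have "\<And>j. X $ j = 0"
  proof (rule ccontr)
    fix j assume "X $ j \<noteq> 0"
    then have "X $ j \<bullet> (S *v X $ j) > 0" "X $ j \<bullet> (T *v X $ j) > 0"
      using pS pT unfolding pos_def_matrix_def by auto
    then show False using z[of j] by simp
  qed
  then have "X = 0" by (simp add: vec_eq_iff)
  then show ?thesis by (simp add: X_def)
qed



lemma blf_sym: "bounded_linear (\<lambda>H::real^'r^'r. R ** H + H ** R)"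
  by (intro bounded_linear_add bounded_bilinear.bounded_linear_right[OF bb_mm] bounded_bilinear.bounded_linear_left[OF bb_mm])

lemma local_sqrt:
  fixes R0 :: "real^'r^'r"
  assumes sym: "transpose R0 = R0"
    and mu: "\<mu> > 0" "\<And>x. x \<bullet> (R0 *v x) \<ge> \<mu> * (norm x)\<^sup>2"
    and g': "bounded_linear g'" "\<And>H. g' (R0 ** H + H ** R0) = H"
  obtains W where "open W" "R0 ** R0 \<in> W"
    "\<And>y. y \<in> W \<Longrightarrow> transpose y = y \<Longrightarrow> \<exists>R. transpose R = R \<and> pos_def_matrix R \<and> R ** R = y"
proof -
  obtain Kv where Kv: "Kv > 0" "\<And>(X::real^'r^'r) (y::real^'r). norm (X *v y) \<le> norm X * norm y * Kv"
    using bounded_bilinear.pos_bounded[OF bb_mv] by blast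
  define \<rho> where "\<rho> = \<mu> / Kv"
  have "\<rho> > 0" using mu Kv by (simp add: \<rho>_def)
  define f' where "f' = (\<lambda>R::real^'r^'r. Blinfun (\<lambda>H. R ** H + H ** R))"
  have f'ap: "\<And>R H. blinfun_apply (f' R) H = R ** H + H ** R"
    by (simp add: f'_def bounded_linear_Blinfun_apply[OF blf_sym])
  have derf: "((\<lambda>R. R ** R) has_derivative blinfun_apply (f' x)) (at x)" for x :: "real^'r^'r"
  proof -
    have "((\<lambda>R. R ** R) has_derivative (\<lambda>h. x ** h + h ** x)) (at x)"
      by (rule bounded_bilinear.FDERIV[OF bb_mm has_derivative_ident has_derivative_ident])
    moreover have "blinfun_apply (f' x) = (\<lambda>h. x ** h + h ** x)" using f'ap by auto
    ultimately show ?thesis by simp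
  qed
  have "linear f'"
  proof (rule linearI)
    show "f' (a + b) = f' a + f' b" for a b
      by (rule blinfun_eqI) (simp add: f'ap plus_blinfun.rep_eq mm_add_left mm_add_right)
    show "f' (c *\<^sub>R a) = c *\<^sub>R f' a" for c a
      by (rule blinfun_eqI) (simp add: f'ap scaleR_blinfun.rep_eq bounded_bilinear.scaleR_left[OF bb_mm]
          bounded_bilinear.scaleR_right[OF bb_mm] scaleR_add_right)
  qed
  then have contf: "continuous_on (ball R0 \<rho>) f'"
    using linear_continuous_on linear_conv_bounded_linear by blast
  have invf: "Blinfun g' o\<^sub>L f' R0 = id_blinfun"
    by (rule blinfun_eqI) (simp add: f'ap bounded_linear_Blinfun_apply[OF g'(1)] g'(2))
  have R0b: "R0 \<in> ball R0 \<rho>" using \<open>\<rho> > 0\<close> by simp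
  obtain U' V g gg where U': "open U'" "U' \<subseteq> ball R0 \<rho>" "R0 \<in> U'" and V: "open V" "R0 ** R0 \<in> V"
    and hom: "homeomorphism U' V (\<lambda>R. R ** R) g"
    and "\<And>y. y \<in> V \<Longrightarrow> (g has_derivative (gg y)) (at y)"
    "\<And>y. y \<in> V \<Longrightarrow> gg y = inv (blinfun_apply (f'(g y)))"
    "\<And>y. y \<in> V \<Longrightarrow> bij (blinfun_apply (f'(g y)))"
    by (rule inverse_function_theorem[OF open_ball derf contf R0b invf]) blast
  have gf: "\<And>x. x \<in> U' \<Longrightarrow> g (x ** x) = x" and fg: "\<And>y. y \<in> V \<Longrightarrow> g y ** g y = y"
    and gV: "g ` V = U'" and gc: "continuous_on V g"
    using hom unfolding homeomorphism_def by auto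
  define W where "W = V \<inter> (\<lambda>y. transpose (g y)) -` U'"
  have "continuous_on V (\<lambda>y. transpose (g y))"
    by (rule linear_continuous_on_compose[OF gc linear_transpose])
  then have "open W" unfolding W_def using continuous_open_preimage V(1) U'(1) by blast
  moreover have "R0 ** R0 \<in> W"
    unfolding W_def using V(2) gf[OF U'(3)] sym U'(3) by simp
  moreover have "\<exists>R. transpose R = R \<and> pos_def_matrix R \<and> R ** R = y"
    if y: "y \<in> W" "transpose y = y" for y
  proof (intro exI conjI)
    define R where "R = g y"
    have RU: "R \<in> U'" "transpose R \<in> U'" using y gV unfolding W_def R_def by auto
    have RR: "R ** R = y" using fg y unfolding R_def W_def by auto
    have "transpose R ** transpose R = y"
      using RR y(2) by (metis matrix_transpose_mul)
    then have "g y = transpose R" using gf[OF RU(2)] by simp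
    then show "transpose R = R" by (simp add: R_def)
    show "R ** R = y" by (rule RR)
    have dR: "norm (R - R0) < \<rho>" using RU(1) U'(2) by (auto simp: dist_norm norm_minus_commute)
    show "pos_def_matrix R"
      unfolding pos_def_matrix_def
    proof (intro allI impI)
      fix x :: "real^'r" assume x: "x \<noteq> 0"
      have "x \<bullet> (R *v x) = x \<bullet> (R0 *v x) + x \<bullet> ((R - R0) *v x)"
        by (simp add: mv_diff_left inner_diff_right)
      moreover have "\<bar>x \<bullet> ((R - R0) *v x)\<bar> \<le> norm x * (norm (R - R0) * norm x * Kv)"
        using Cauchy_Schwarz_ineq2[of x "(R - R0) *v x"] Kv(2)[of "R - R0" x]
        by (meson mult_left_mono norm_ge_zero order_trans)
      moreover have "norm (R - R0) * Kv < \<mu>"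
        using dR Kv(1) by (simp add: \<rho>_def pos_less_divide_eq)
      then have "norm (R - R0) * Kv * (norm x)\<^sup>2 < \<mu> * (norm x)\<^sup>2"
        using x by (intro mult_strict_right_mono) auto
      ultimately show "x \<bullet> (R *v x) > 0"
        using mu(2)[of x] by (simp add: power2_eq_square algebra_simps)
    qed
  qed
  ultimately show ?thesis using that by blast
qed



definition psi :: "real \<Rightarrow> real \<Rightarrow> real" where
  "psi \<delta> t = (if t \<ge> \<delta>\<^sup>2 then sqrt t - \<delta> / 2 else t / (2 * \<delta>))"

lemma huber_psi:
  assumes "\<delta> > 0" "x \<ge> 0" shows "huber \<delta> x = psi \<delta> (x\<^sup>2)"
proof -
  have "x \<ge> \<delta> \<longleftrightarrow> x\<^sup>2 \<ge> \<delta>\<^sup>2" using abs_le_square_iff[of \<delta> x] assms by simp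
  then show ?thesis using assms by (simp add: huber_def psi_def)
qed

lemma pd_inj:
  fixes R :: "real^'r^'r"
  assumes "pos_def_matrix R" shows "invertible R"
proof -
  have "\<forall>x. R *v x = 0 \<longrightarrow> x = 0"
    using assms unfolding pos_def_matrix_def by (metis inner_zero_right less_irrefl)
  then show ?thesis using matrix_left_invertible_ker invertible_left_inverse by blast
qed

lemma inv_sym_pd:
  fixes R :: "real^'r^'r"
  assumes s: "transpose R = R" and p: "pos_def_matrix R"
  shows "transpose (matrix_inv R) = matrix_inv R" "pos_def_matrix (matrix_inv R)"
    "matrix_inv R ** matrix_inv R = matrix_inv (R ** R)"
proof -
  have inv: "invertible R" by (rule pd_inj[OF p])
  note m = minv[OF inv]
  have "R ** transpose (matrix_inv R) = mat 1"
    using m s by (metis matrix_transpose_mul transpose_mat)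
  then show t: "transpose (matrix_inv R) = matrix_inv R" using minv_unique by metis
  show "pos_def_matrix (matrix_inv R)"
    unfolding pos_def_matrix_def
  proof (intro allI impI)
    fix x :: "real^'r" assume x: "x \<noteq> 0"
    define y where "y = matrix_inv R *v x"
    have xy: "x = R *v y" using m by (simp add: y_def matrix_vector_mul_assoc)
    then have "y \<noteq> 0" using x by auto
    then have "y \<bullet> (R *v y) > 0" using p unfolding pos_def_matrix_def by auto
    moreover have "x \<bullet> (matrix_inv R *v x) = y \<bullet> (R *v y)"
      using xy by (simp add: y_def mv_inner s inner_commute)
    ultimately show "x \<bullet> (matrix_inv R *v x) > 0" by simp
  qed
  have "(R ** R) ** (matrix_inv R ** matrix_inv R) = mat 1"
    by (metis m matrix_mul_assoc matrix_mul_lid)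
  then show "matrix_inv R ** matrix_inv R = matrix_inv (R ** R)"
    using minv_unique by metis
qed

lemma F_local:
  fixes Z :: "real^'r^'n"
  assumes d: "\<delta> > 0"
    and hW: "\<And>y. y \<in> W \<Longrightarrow> transpose y = y \<Longrightarrow> \<exists>R. transpose R = R \<and> pos_def_matrix R \<and> R ** R = y"
    and Z: "transpose Z ** Z \<in> W"
  shows "F_huber \<delta> Z = (\<Sum>n\<in>UNIV. psi \<delta> (Z $ n \<bullet> (matrix_inv (transpose Z ** Z) *v Z $ n)) + \<delta> / 2)"
proof -
  define A where "A = transpose Z ** Z"
  have "transpose A = A" by (simp add: A_def matrix_transpose_mul)
  then obtain R where R: "transpose R = R" "pos_def_matrix R" "R ** R = A"
    using hW Z unfolding A_def by blast
  define S where "S = matrix_inv R"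
  have S: "transpose S = S" "pos_def_matrix S" "S ** S = matrix_inv A"
    using inv_sym_pd[OF R(1,2)] R(3) by (auto simp: S_def)
  have "mat_inv_sqrt A = S"
    unfolding mat_inv_sqrt_def
  proof (rule the_equality)
    show "transpose S = S \<and> pos_def_matrix S \<and> S ** S = matrix_inv A" using S by simp
    fix T assume "transpose T = T \<and> pos_def_matrix T \<and> T ** T = matrix_inv A"
    then show "T = S" using sqrt_unique[of T S] S by auto
  qed
  moreover have "huber \<delta> (norm ((Z ** S) $ n)) = psi \<delta> (Z $ n \<bullet> (matrix_inv A *v Z $ n))" for n
  proof -
    have "(norm ((Z ** S) $ n))\<^sup>2 = (S *v Z $ n) \<bullet> (S *v Z $ n)"
      by (simp add: row_mm S(1) power2_norm_eq_inner)
    also have "\<dots> = Z $ n \<bullet> (matrix_inv A *v Z $ n)"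
      by (simp add: mv_inner S(1) matrix_vector_mul_assoc S(3))
    finally have c: "(norm ((Z ** S) $ n))\<^sup>2 = Z $ n \<bullet> (matrix_inv A *v Z $ n)" .
    have h: "huber \<delta> (norm ((Z ** S) $ n)) = psi \<delta> ((norm ((Z ** S) $ n))\<^sup>2)"
      by (rule huber_psi[OF d norm_ge_zero])
    show ?thesis using h c by metis
  qed
  ultimately show ?thesis
    by (simp add: F_huber_def A_def)
qed



definition psi' :: "real \<Rightarrow> real \<Rightarrow> real" where
  "psi' \<delta> t = (if t \<ge> \<delta>\<^sup>2 then 1 / (2 * sqrt t) else 1 / (2 * \<delta>))"

lemma psi_deriv:
  assumes d: "\<delta> > 0"
  shows "(psi \<delta> has_real_derivative psi' \<delta> t) (at t)"
proof (cases "t = \<delta>\<^sup>2")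
  case False
  show ?thesis
  proof (cases "t > \<delta>\<^sup>2")
    case True
    then have tp: "t > 0" using d by (smt (verit) zero_less_power)
    have "((\<lambda>x. sqrt x - \<delta> / 2) has_real_derivative inverse (sqrt t) / 2) (at t)"
      using DERIV_real_sqrt[OF tp] using tp by (auto intro!: derivative_eq_intros)
    moreover have "inverse (sqrt t) / 2 = psi' \<delta> t"
      using True by (simp add: psi'_def inverse_eq_divide)
    ultimately have "((\<lambda>x. sqrt x - \<delta> / 2) has_real_derivative psi' \<delta> t) (at t)"
      by simp
    then show ?thesis
      by (rule has_field_derivative_transform_within_open[where S="{\<delta>\<^sup>2<..}"])
         (use True in \<open>auto simp: psi_def\<close>)
  next
    case False
    with \<open>t \<noteq> \<delta>\<^sup>2\<close> have lt: "t < \<delta>\<^sup>2" by simp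
    have "((\<lambda>x. x / (2 * \<delta>)) has_real_derivative psi' \<delta> t) (at t)"
      using lt d by (auto intro!: derivative_eq_intros simp: psi'_def)
    then show ?thesis
      by (rule has_field_derivative_transform_within_open[where S="{..<\<delta>\<^sup>2}"])
         (use lt in \<open>auto simp: psi_def\<close>)
  qed
next
  case True
  have tp: "t > 0" using d True by simp
  have st: "sqrt t = \<delta>" using True d by simp
  have pd: "psi' \<delta> t = 1 / (2 * \<delta>)" using True st by (simp add: psi'_def)
  have pt: "psi \<delta> t = \<delta> / 2" using True st by (simp add: psi_def)
  have sq: "((\<lambda>h. (sqrt (t + h) - sqrt t) / h) \<longlongrightarrow> inverse (sqrt t) / 2) (at 0)"
    using DERIV_real_sqrt[OF tp] unfolding DERIV_def by simp
  show ?thesis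
    unfolding DERIV_def
  proof (rule filterlim_split_at)
    have "((\<lambda>h. (sqrt (t + h) - sqrt t) / h) \<longlongrightarrow> psi' \<delta> t) (at_right 0)"
    proof -
      have "inverse (sqrt t) / 2 = psi' \<delta> t" using pd st by (simp add: inverse_eq_divide)
      then show ?thesis using sq filterlim_at_split by metis
    qed
    moreover have "eventually (\<lambda>h. (sqrt (t + h) - sqrt t) / h = (psi \<delta> (t + h) - psi \<delta> t) / h) (at_right 0)"
      using eventually_at_right_less[of "0::real"]
      by eventually_elim (use True st pt in \<open>auto simp: psi_def\<close>)
    ultimately show "((\<lambda>h. (psi \<delta> (t + h) - psi \<delta> t) / h) \<longlongrightarrow> psi' \<delta> t) (at_right 0)"
      by (rule Lim_transform_eventually)
    have "eventually (\<lambda>h. 1 / (2 * \<delta>) = (psi \<delta> (t + h) - psi \<delta> t) / h) (at_left 0)"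
      using eventually_at_left_real[of "-1" 0, simplified]
      by eventually_elim (use True st pt d in \<open>auto simp: psi_def field_simps power2_eq_square\<close>)
    then show "((\<lambda>h. (psi \<delta> (t + h) - psi \<delta> t) / h) \<longlongrightarrow> psi' \<delta> t) (at_left 0)"
      unfolding pd by (rule Lim_transform_eventually[OF tendsto_const])
  qed
qed



declare transpose_matrix_vector [simp del]


lemma diag_left:
  fixes D :: "real^'r^'r" and K :: "real^'k^'r"
  assumes "\<forall>i j. i \<noteq> j \<longrightarrow> D $ i $ j = 0"
  shows "(D ** K) $ i $ j = D $ i $ i * K $ i $ j"
proof -
  have "(\<Sum>k\<in>UNIV. D $ i $ k * K $ k $ j) = (\<Sum>k\<in>UNIV. if k = i then D $ i $ i * K $ i $ j else 0)"
    using assms by (intro sum.cong) auto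
  then show ?thesis by (simp add: matrix_matrix_mult_def)
qed

lemma diag_right:
  fixes D :: "real^'r^'r" and K :: "real^'r^'k"
  assumes "\<forall>i j. i \<noteq> j \<longrightarrow> D $ i $ j = 0"
  shows "(K ** D) $ i $ j = K $ i $ j * D $ j $ j"
proof -
  have "(\<Sum>k\<in>UNIV. K $ i $ k * D $ k $ j) = (\<Sum>k\<in>UNIV. if k = j then K $ i $ j * D $ j $ j else 0)"
    using assms by (intro sum.cong) auto
  then show ?thesis by (simp add: matrix_matrix_mult_def)
qed

lemma diag_mv:
  fixes D :: "real^'r^'r"
  assumes "\<forall>i j. i \<noteq> j \<longrightarrow> D $ i $ j = 0"
  shows "(D *v w) $ i = D $ i $ i * w $ i"
proof -
  have "(\<Sum>k\<in>UNIV. D $ i $ k * w $ k) = (\<Sum>k\<in>UNIV. if k = i then D $ i $ i * w $ i else 0)"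
    using assms by (intro sum.cong) auto
  then show ?thesis by (simp add: matrix_vector_mult_def)
qed

lemma row_comb: "((A::real^'k^'m) ** (Y::real^'j^'k)) $ m = (\<Sum>k\<in>UNIV. A $ m $ k *\<^sub>R Y $ k)"
  by (simp add: vec_eq_iff matrix_matrix_mult_def sum_component)

lemma mmt_entry: "((U::real^'r^'n) ** transpose U) $ m $ n = U $ m \<bullet> U $ n"
  by (simp add: matrix_matrix_mult_def transpose_def inner_vec_def)

lemma inner_mv_sum: "((U::real^'r^'n) *v u) \<bullet> w = (\<Sum>m\<in>UNIV. (U $ m \<bullet> u) * w $ m)"
  by (simp add: inner_vec_def matrix_vector_mul_component)

lemma orth_norm:
  fixes V :: "real^'r^'r"
  assumes "V ** transpose V = mat 1"
  shows "norm (transpose V *v u) = norm u"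
proof -
  have "(transpose V *v u) \<bullet> (transpose V *v u) = u \<bullet> u"
    by (simp only: mv_inner transpose_transpose matrix_vector_mul_assoc assms matrix_vector_mul_lid)
  then show ?thesis by (simp add: norm_eq_sqrt_inner)
qed

lemma mv_minus: "(- (A::real^'m^'n)) *v x = - (A *v x)"
  by (rule bounded_bilinear.minus_left[OF bb_mv])

lemma key_scalar:
  assumes d: "\<delta> > 0" and r: "r > 0"
  shows "2 * psi' \<delta> (r\<^sup>2) = huber_deriv \<delta> r / r"
proof (cases "r \<ge> \<delta>")
  case True
  then have "r\<^sup>2 \<ge> \<delta>\<^sup>2" using d by (simp add: power_mono)
  then show ?thesis using True r by (simp add: psi'_def huber_deriv_def)
next
  case False
  then have "\<not> r\<^sup>2 \<ge> \<delta>\<^sup>2" using r d abs_le_square_iff[of \<delta> r] by simp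
  then show ?thesis using False r d by (simp add: psi'_def huber_deriv_def)
qed



lemma cancel_r: "(B::real^'r^'r) ** C = mat 1 \<Longrightarrow> (X::real^'r^'k) ** B ** C = X"
  by (metis matrix_mul_assoc matrix_mul_rid)

lemma cancel_r2: "(B::real^'n^'r) ** (C::real^'r^'n) = mat 1 \<Longrightarrow> (X::real^'r^'k) ** B ** C = X"
  by (metis matrix_mul_assoc matrix_mul_rid)

lemma algebra_core:
  fixes U Z H :: "real^'r^'n" and \<Lambda> V Li Ai :: "real^'r^'r"
  assumes d: "\<delta> > 0"
    and UtU: "transpose U ** U = mat 1"
    and dL: "\<forall>i j. i \<noteq> j \<longrightarrow> \<Lambda> $ i $ j = 0"
    and pL: "\<forall>i. \<Lambda> $ i $ i > 0"
    and VtV: "transpose V ** V = mat 1" and VVt: "V ** transpose V = mat 1"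
    and Z: "Z = U ** \<Lambda> ** V"
    and Li: "Li = (\<chi> i j. if i = j then 1 / \<Lambda> $ i $ i else 0)"
    and Ai: "Ai = transpose V ** Li ** Li ** V"
  shows "(\<Sum>n\<in>UNIV. psi' \<delta> (Z $ n \<bullet> (Ai *v Z $ n)) *
           (Z $ n \<bullet> (Ai *v H $ n + (- (Ai ** (transpose Z ** H + transpose H ** Z) ** Ai)) *v Z $ n)
            + H $ n \<bullet> (Ai *v Z $ n)))
       = ((mat 1 - U ** transpose U) ** D_huber \<delta> (U ** V) ** U ** Li ** V) \<bullet> H"
proof -
  have dLi: "\<forall>i j. i \<noteq> j \<longrightarrow> Li $ i $ j = 0" by (simp add: Li)
  have "(\<Lambda> ** Li) $ i $ j = (mat 1 :: real^'r^'r) $ i $ j" for i j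
    using pL[rule_format, of i] by (cases "i = j") (auto simp: diag_left[OF dL] Li mat_def)
  then have LLi: "\<Lambda> ** Li = mat 1" by (simp add: vec_eq_iff)
  have "(Li ** \<Lambda>) $ i $ j = (mat 1 :: real^'r^'r) $ i $ j" for i j
    using pL[rule_format, of i] unfolding diag_left[OF dLi] by (cases "i = j") (auto simp: Li mat_def dL)
  then have LiL: "Li ** \<Lambda> = mat 1" by (simp add: vec_eq_iff)
  have "\<Lambda> $ j $ i = \<Lambda> $ i $ j" for i j
    using dL by (cases "i = j") auto
  then have tL: "transpose \<Lambda> = \<Lambda>" by (simp add: vec_eq_iff transpose_def)
  have tLi: "transpose Li = Li" by (simp add: vec_eq_iff transpose_def Li)
  define y where "y n = transpose V *v (Li *v U $ n)" for n
  have Zr: "Z $ n = (transpose V ** \<Lambda>) *v U $ n" for n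
    by (simp add: Z row_mm tL matrix_vector_mul_assoc)
  have yr: "y n = (transpose V ** Li) *v U $ n" for n
    by (simp add: y_def matrix_vector_mul_assoc)
  have AZ: "Ai *v Z $ n = y n" for n
    by (simp add: Zr yr Ai matrix_vector_mul_assoc matrix_mul_assoc cancel_r[OF VVt] cancel_r[OF LiL])
  have tAi: "transpose Ai = Ai" by (simp add: Ai matrix_transpose_mul tLi matrix_mul_assoc)
  have qn: "Z $ n \<bullet> (Ai *v Z $ n) = U $ n \<bullet> U $ n" for n
  proof -
    have "Z $ n \<bullet> (Ai *v Z $ n) = Z $ n \<bullet> y n" by (simp only: AZ)
    also have "\<dots> = ((transpose V ** \<Lambda>) *v U $ n) \<bullet> ((transpose V ** Li) *v U $ n)"
      by (simp only: Zr yr)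
    also have "\<dots> = U $ n \<bullet> ((\<Lambda> ** Li) *v U $ n)"
      by (simp add: mv_inner matrix_transpose_mul tL matrix_vector_mul_assoc matrix_mul_assoc cancel_r[OF VVt])
    also have "\<dots> = U $ n \<bullet> U $ n" by (simp add: LLi)
    finally show ?thesis .
  qed
  have T1: "Z $ n \<bullet> (Ai *v h) = y n \<bullet> h" for n h
    by (metis AZ mv_inner tAi)
  have ZY: "Z *v y n = U *v U $ n" for n
    by (simp add: Z yr matrix_vector_mul_assoc matrix_mul_assoc cancel_r[OF VVt] cancel_r[OF LLi])
  have T2: "Z $ n \<bullet> ((- (Ai ** (transpose Z ** H + transpose H ** Z) ** Ai)) *v Z $ n)
      = - 2 * (\<Sum>m\<in>UNIV. (U $ m \<bullet> U $ n) * (H $ m \<bullet> y n))" for n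
  proof -
    define M where "M = transpose Z ** H + transpose H ** Z"
    have "(Ai ** M ** Ai) *v Z $ n = Ai *v (M *v y n)"
      by (simp add: matrix_vector_mul_assoc[symmetric] AZ)
    then have "Z $ n \<bullet> ((- (Ai ** M ** Ai)) *v Z $ n) = - (y n \<bullet> (M *v y n))"
      by (simp add: mv_minus T1)
    also have "M *v y n = transpose Z *v (H *v y n) + transpose H *v (Z *v y n)"
      by (simp add: M_def mv_add_left matrix_vector_mul_assoc)
    also have "y n \<bullet> \<dots> = (Z *v y n) \<bullet> (H *v y n) + (H *v y n) \<bullet> (Z *v y n)"
      by (simp add: inner_add_right mv_inner)
    also have "\<dots> = 2 * ((U *v U $ n) \<bullet> (H *v y n))"
      by (simp add: ZY inner_commute)
    also have "(U *v U $ n) \<bullet> (H *v y n) = (\<Sum>m\<in>UNIV. (U $ m \<bullet> U $ n) * (H $ m \<bullet> y n))"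
      by (simp add: inner_mv_sum matrix_vector_mul_component)
    finally show ?thesis by (simp add: M_def)
  qed
  define P where "P = mat 1 - U ** transpose U"
  have Pe: "P $ m $ n = (if m = n then 1 else 0) - U $ m \<bullet> U $ n" for m n
    by (simp add: P_def mat_def mmt_entry)
  define c where "c n = psi' \<delta> (U $ n \<bullet> U $ n)" for n
  have LHS: "psi' \<delta> (Z $ n \<bullet> (Ai *v Z $ n)) *
           (Z $ n \<bullet> (Ai *v H $ n + (- (Ai ** (transpose Z ** H + transpose H ** Z) ** Ai)) *v Z $ n)
            + H $ n \<bullet> (Ai *v Z $ n))
      = (\<Sum>m\<in>UNIV. 2 * c n * (P $ m $ n * (H $ m \<bullet> y n)))" for n
  proof -
    have "(\<Sum>m\<in>UNIV. P $ m $ n * (H $ m \<bullet> y n))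
        = (\<Sum>m\<in>UNIV. (if m = n then H $ m \<bullet> y n else 0) - (U $ m \<bullet> U $ n) * (H $ m \<bullet> y n))"
      by (intro sum.cong) (auto simp: Pe algebra_simps)
    also have "\<dots> = (\<Sum>m\<in>UNIV. (if m = n then H $ m \<bullet> y n else 0)) - (\<Sum>m\<in>UNIV. (U $ m \<bullet> U $ n) * (H $ m \<bullet> y n))"
      by (rule sum_subtractf)
    also have "\<dots> = H $ n \<bullet> y n - (\<Sum>m\<in>UNIV. (U $ m \<bullet> U $ n) * (H $ m \<bullet> y n))" by simp
    finally have s: "(\<Sum>m\<in>UNIV. P $ m $ n * (H $ m \<bullet> y n)) = H $ n \<bullet> y n - (\<Sum>m\<in>UNIV. (U $ m \<bullet> U $ n) * (H $ m \<bullet> y n))" .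
    define S where "S = (\<Sum>m\<in>UNIV. (U $ m \<bullet> U $ n) * (H $ m \<bullet> y n))"
    have "psi' \<delta> (Z $ n \<bullet> (Ai *v Z $ n)) *
           (Z $ n \<bullet> (Ai *v H $ n + (- (Ai ** (transpose Z ** H + transpose H ** Z) ** Ai)) *v Z $ n)
            + H $ n \<bullet> (Ai *v Z $ n)) = c n * (y n \<bullet> H $ n + (- 2 * S) + H $ n \<bullet> y n)"
      unfolding S_def by (simp only: qn c_def[symmetric]) (simp only: inner_add_right T1 T2 AZ)
    also have "\<dots> = 2 * c n * (H $ n \<bullet> y n - S)"
      by (simp add: inner_commute[of "y n"] algebra_simps)
    also have "\<dots> = 2 * c n * (\<Sum>m\<in>UNIV. P $ m $ n * (H $ m \<bullet> y n))"
      by (simp only: s S_def)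
    also have "\<dots> = (\<Sum>m\<in>UNIV. 2 * c n * (P $ m $ n * (H $ m \<bullet> y n)))"
      by (rule sum_distrib_left)
    finally show ?thesis .
  qed
  define Dm where "Dm = D_huber \<delta> (U ** V)"
  have dD: "\<forall>i j. i \<noteq> j \<longrightarrow> Dm $ i $ j = 0" by (simp add: Dm_def D_huber_def)
  have ULV: "(U ** Li ** V) $ k = y k" for k
    by (simp add: row_mm tLi y_def)
  have Gr: "((mat 1 - U ** transpose U) ** D_huber \<delta> (U ** V) ** U ** Li ** V) $ m
      = (\<Sum>k\<in>UNIV. (P $ m $ k * Dm $ k $ k) *\<^sub>R y k)" for m
  proof -
    have e: "(mat 1 - U ** transpose U) ** D_huber \<delta> (U ** V) ** U ** Li ** V = (P ** Dm) ** (U ** Li ** V)"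
      by (simp add: P_def Dm_def matrix_mul_assoc)
    show ?thesis unfolding e by (subst row_comb) (simp only: ULV diag_right[OF dD])
  qed
  have RHS: "((mat 1 - U ** transpose U) ** D_huber \<delta> (U ** V) ** U ** Li ** V) \<bullet> H
      = (\<Sum>m\<in>UNIV. \<Sum>n\<in>UNIV. P $ m $ n * Dm $ n $ n * (y n \<bullet> H $ m))"
    by (simp add: inner_vec_def[of _ H] Gr inner_sum_left)
  have key: "2 * c n * (h \<bullet> y n) = Dm $ n $ n * (y n \<bullet> h)" for n h
  proof (cases "U $ n = 0")
    case True
    then show ?thesis by (simp add: y_def)
  next
    case False
    define r where "r = norm (U $ n)"
    have r: "r > 0" using False by (simp add: r_def)
    have UVn: "(U ** V) $ n = transpose V *v U $ n" by (simp add: row_mm)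
    have nUV: "norm ((U ** V) $ n) = r" by (simp add: UVn orth_norm[OF VVt] r_def)
    then have "(U ** V) $ n \<noteq> 0" using r by auto
    then have "Dm $ n $ n = huber_deriv \<delta> r / r" by (simp add: Dm_def D_huber_def nUV)
    moreover have "c n = psi' \<delta> (r\<^sup>2)" by (simp add: c_def r_def power2_norm_eq_inner)
    ultimately show ?thesis using key_scalar[OF d r] by (simp add: inner_commute)
  qed
  show ?thesis
  proof -
    have t: "2 * c n * (P $ m $ n * (H $ m \<bullet> y n)) = P $ m $ n * Dm $ n $ n * (y n \<bullet> H $ m)" for m n
    proof -
      have "2 * c n * (P $ m $ n * (H $ m \<bullet> y n)) = P $ m $ n * (2 * c n * (H $ m \<bullet> y n))" by simp
      also have "\<dots> = P $ m $ n * (Dm $ n $ n * (y n \<bullet> H $ m))" by (simp only: key)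
      finally show ?thesis by simp
    qed
    have "(\<Sum>n\<in>UNIV. \<Sum>m\<in>UNIV. 2 * c n * (P $ m $ n * (H $ m \<bullet> y n)))
        = (\<Sum>m\<in>UNIV. \<Sum>n\<in>UNIV. 2 * c n * (P $ m $ n * (H $ m \<bullet> y n)))"
      by (rule sum.swap)
    also have "\<dots> = (\<Sum>m\<in>UNIV. \<Sum>n\<in>UNIV. P $ m $ n * Dm $ n $ n * (y n \<bullet> H $ m))"
      by (simp only: t)
    finally show ?thesis unfolding LHS RHS .
  qed
qed



lemma bl_transpose: "bounded_linear (transpose :: real^'m^'n \<Rightarrow> real^'n^'m)"
  using linear_transpose linear_conv_bounded_linear by blast

theorem proposition4:
  fixes \<delta> :: real and Z U :: "real^'r^'n" and \<Lambda> V :: "real^'r^'r"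
  assumes "\<delta> > 0"
    and "rank Z = CARD('r)"
    and "transpose U ** U = mat 1"
    and "\<forall>i j. i \<noteq> j \<longrightarrow> \<Lambda> $ i $ j = 0"
    and "\<forall>i. \<Lambda> $ i $ i > 0"
    and "orthogonal_matrix V"
    and "Z = U ** \<Lambda> ** V"
  shows "(F_huber \<delta> has_derivative
           (\<lambda>H. ((mat 1 - U ** transpose U) ** D_huber \<delta> (U ** V) ** U ** matrix_inv \<Lambda> ** V) \<bullet> H))
         (at Z)"
proof -
  note d = assms(1) and UtU = assms(3) and dL = assms(4) and pL = assms(5) and Zdef = assms(7)
  have VtV: "transpose V ** V = mat 1" and VVt: "V ** transpose V = mat 1"
    using assms(6) unfolding orthogonal_matrix_def by auto
  define Li where "Li = (\<chi> i j. if i = j then 1 / \<Lambda> $ i $ i else (0::real))"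
  have dLi: "\<forall>i j. i \<noteq> j \<longrightarrow> Li $ i $ j = 0" by (simp add: Li_def)
  have "(\<Lambda> ** Li) $ i $ j = (mat 1 :: real^'r^'r) $ i $ j" for i j
    using pL[rule_format, of i] by (cases "i = j") (auto simp: diag_left[OF dL] Li_def mat_def)
  then have LLi: "\<Lambda> ** Li = mat 1" by (simp add: vec_eq_iff)
  have "(Li ** \<Lambda>) $ i $ j = (mat 1 :: real^'r^'r) $ i $ j" for i j
    using pL[rule_format, of i] unfolding diag_left[OF dLi] by (cases "i = j") (auto simp: Li_def mat_def dL)
  then have LiL: "Li ** \<Lambda> = mat 1" by (simp add: vec_eq_iff)
  have "\<Lambda> $ j $ i = \<Lambda> $ i $ j" for i j
    using dL by (cases "i = j") auto
  then have tL: "transpose \<Lambda> = \<Lambda>" by (simp add: vec_eq_iff transpose_def)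
  have iL: "matrix_inv \<Lambda> = Li" by (rule minv_unique[OF LLi])
  define R0 where "R0 = transpose V ** \<Lambda> ** V"
  have sR0: "transpose R0 = R0" by (simp add: R0_def matrix_transpose_mul tL matrix_mul_assoc)
  have ZZ: "transpose Z ** Z = transpose V ** \<Lambda> ** \<Lambda> ** V"
    by (simp add: Zdef matrix_transpose_mul tL matrix_mul_assoc cancel_r2[OF UtU])
  have R0R0: "R0 ** R0 = transpose Z ** Z"
    by (simp add: ZZ R0_def matrix_mul_assoc cancel_r[OF VVt])
  define \<mu> where "\<mu> = Min (range (\<lambda>i. \<Lambda> $ i $ i))"
  have mu_pos: "\<mu> > 0" using pL by (simp add: \<mu>_def)
  have mu_le: "\<mu> \<le> \<Lambda> $ i $ i" for i by (simp add: \<mu>_def)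
  have mu: "x \<bullet> (R0 *v x) \<ge> \<mu> * (norm x)\<^sup>2" for x
  proof -
    define w where "w = V *v x"
    have nw: "norm w = norm x"
      using orth_norm[of "transpose V" x] VtV by (simp add: w_def)
    have "x \<bullet> (R0 *v x) = w \<bullet> (\<Lambda> *v w)"
      by (simp add: R0_def w_def matrix_vector_mul_assoc[symmetric] mv_inner)
    also have "\<dots> = (\<Sum>i\<in>UNIV. \<Lambda> $ i $ i * (w $ i)\<^sup>2)"
      by (simp add: inner_vec_def diag_mv[OF dL] power2_eq_square mult_ac)
    also have "\<dots> \<ge> (\<Sum>i\<in>UNIV. \<mu> * (w $ i)\<^sup>2)"
      by (intro sum_mono mult_right_mono mu_le) auto
    also have "(\<Sum>i\<in>UNIV. \<mu> * (w $ i)\<^sup>2) = \<mu> * (norm w)\<^sup>2"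
    proof -
      have nw2: "(norm w)\<^sup>2 = (\<Sum>i\<in>UNIV. w $ i * w $ i)" by (simp add: power2_norm_eq_inner inner_vec_def)
      show ?thesis unfolding nw2 by (simp add: sum_distrib_left power2_eq_square)
    qed
    finally show ?thesis using nw by simp
  qed
  have pR0: "pos_def_matrix R0"
    unfolding pos_def_matrix_def
  proof (intro allI impI)
    fix x :: "real^'r" assume "x \<noteq> 0"
    then have "\<mu> * (norm x)\<^sup>2 > 0" using mu_pos by simp
    then show "x \<bullet> (R0 *v x) > 0" using mu[of x] by linarith
  qed
  define mid where "mid = (\<lambda>K::real^'r^'r. \<chi> i j. K $ i $ j / (\<Lambda> $ i $ i + \<Lambda> $ j $ j))"
  define g' where "g' = (\<lambda>Y. transpose V ** mid (V ** Y ** transpose V) ** V)"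
  have "linear mid"
    by (intro linearI) (simp_all add: mid_def vec_eq_iff add_divide_distrib)
  then have blmid: "bounded_linear mid" using linear_conv_bounded_linear by blast
  have bl1: "bounded_linear (\<lambda>Y::real^'r^'r. V ** Y ** transpose V)"
    using bounded_linear_compose[OF bounded_bilinear.bounded_linear_left[OF bb_mm, of "transpose V"]
        bounded_bilinear.bounded_linear_right[OF bb_mm, of V]] by simp
  have bl2: "bounded_linear (\<lambda>Y::real^'r^'r. transpose V ** Y ** V)"
    using bounded_linear_compose[OF bounded_bilinear.bounded_linear_left[OF bb_mm, of V]
        bounded_bilinear.bounded_linear_right[OF bb_mm, of "transpose V"]] by simp
  have "bounded_linear g'"
    unfolding g'_def using bounded_linear_compose[OF bl2 bounded_linear_compose[OF blmid bl1]] by simp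
  moreover have "g' (R0 ** H + H ** R0) = H" for H
  proof -
    define K where "K = V ** H ** transpose V"
    have "V ** (R0 ** H + H ** R0) ** transpose V = \<Lambda> ** K + K ** \<Lambda>"
      by (simp add: K_def R0_def mm_add_left mm_add_right matrix_mul_assoc cancel_r[OF VVt] VVt)
    moreover have "mid (\<Lambda> ** K + K ** \<Lambda>) = K"
    proof -
      have "(\<Lambda> $ i $ i * K $ i $ j + K $ i $ j * \<Lambda> $ j $ j) / (\<Lambda> $ i $ i + \<Lambda> $ j $ j) = K $ i $ j" for i j
      proof -
        have "\<Lambda> $ i $ i + \<Lambda> $ j $ j > 0" using pL by (simp add: add_pos_pos)
        then show ?thesis by (simp add: field_simps)
      qed
      then show ?thesis by (simp add: mid_def vec_eq_iff diag_left[OF dL] diag_right[OF dL])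
    qed
    ultimately show ?thesis
      by (simp add: g'_def K_def matrix_mul_assoc VtV cancel_r[OF VtV])
  qed
  ultimately obtain W where W: "open W" "R0 ** R0 \<in> W"
    "\<And>y. y \<in> W \<Longrightarrow> transpose y = y \<Longrightarrow> \<exists>R. transpose R = R \<and> pos_def_matrix R \<and> R ** R = y"
    using local_sqrt[OF sR0 mu_pos mu] by metis
  define Oset where "Oset = {X :: real^'r^'n. transpose X ** X \<in> W}"
  have "continuous_on UNIV (\<lambda>X :: real^'r^'n. transpose X ** X)"
    using bilinear_continuous_on_compose[OF linear_continuous_on[OF bl_transpose] continuous_on_id, of "(**)"]
      bb_mm bilinear_conv_bounded_bilinear by blast
  then have oO: "open Oset"
    using continuous_open_preimage[OF _ open_UNIV W(1)] unfolding Oset_def by (simp add: vimage_def Collect_conv_if)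
  have ZO: "Z \<in> Oset" using W(2) R0R0 by (simp add: Oset_def)
  define G where "G = (\<lambda>X :: real^'r^'n. \<Sum>n\<in>UNIV. psi \<delta> (X $ n \<bullet> (matrix_inv (transpose X ** X) *v X $ n)) + \<delta> / 2)"
  have FG: "G X = F_huber \<delta> X" if "X \<in> Oset" for X
    using F_local[where W=W and Z=X, OF d W(3)] that by (simp add: G_def Oset_def)
  have invA: "invertible (transpose Z ** Z)"
    using R0R0 invertible_mult[OF pd_inj[OF pR0] pd_inj[OF pR0]] by simp
  define Ai where "Ai = transpose V ** Li ** Li ** V"
  have iA: "matrix_inv (transpose Z ** Z) = Ai"
    by (rule minv_unique) (simp add: ZZ Ai_def matrix_mul_assoc cancel_r[OF VVt] cancel_r[OF LLi] VtV)
  have dA: "((\<lambda>X :: real^'r^'n. transpose X ** X) has_derivative (\<lambda>H. transpose Z ** H + transpose H ** Z)) (at Z)"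
    by (rule bounded_bilinear.FDERIV[OF bb_mm bounded_linear_imp_has_derivative[OF bl_transpose] has_derivative_ident])
  have dI: "((\<lambda>X. matrix_inv (transpose X ** X)) has_derivative
      (\<lambda>H. - (Ai ** (transpose Z ** H + transpose H ** Z) ** Ai))) (at Z)"
    using has_derivative_compose[OF dA minv_deriv[OF invA]] by (simp add: iA)
  have dq: "((\<lambda>X. X $ n \<bullet> (matrix_inv (transpose X ** X) *v X $ n)) has_derivative
      (\<lambda>H. Z $ n \<bullet> (Ai *v H $ n + (- (Ai ** (transpose Z ** H + transpose H ** Z) ** Ai)) *v Z $ n)
            + H $ n \<bullet> (Ai *v Z $ n))) (at Z)" for n
  proof -
    have hr: "((\<lambda>X :: real^'r^'n. X $ n) has_derivative (\<lambda>H. H $ n)) (at Z)"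
      by (rule bounded_linear_imp_has_derivative[OF bounded_linear_vec_nth])
    have dv: "((\<lambda>X. matrix_inv (transpose X ** X) *v X $ n) has_derivative
        (\<lambda>H. matrix_inv (transpose Z ** Z) *v H $ n + (- (Ai ** (transpose Z ** H + transpose H ** Z) ** Ai)) *v Z $ n)) (at Z)"
      by (rule bounded_bilinear.FDERIV[OF bb_mv dI hr])
    show ?thesis using has_derivative_inner[OF hr dv] by (simp add: iA)
  qed
  have dG: "(G has_derivative (\<lambda>H. \<Sum>n\<in>UNIV. psi' \<delta> (Z $ n \<bullet> (Ai *v Z $ n)) *
           (Z $ n \<bullet> (Ai *v H $ n + (- (Ai ** (transpose Z ** H + transpose H ** Z) ** Ai)) *v Z $ n)
            + H $ n \<bullet> (Ai *v Z $ n)))) (at Z)"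
    unfolding G_def
  proof (intro has_derivative_sum has_derivative_add_const)
    fix n :: 'n
    show "((\<lambda>X. psi \<delta> (X $ n \<bullet> (matrix_inv (transpose X ** X) *v X $ n))) has_derivative
        (\<lambda>H. psi' \<delta> (Z $ n \<bullet> (Ai *v Z $ n)) *
           (Z $ n \<bullet> (Ai *v H $ n + (- (Ai ** (transpose Z ** H + transpose H ** Z) ** Ai)) *v Z $ n)
            + H $ n \<bullet> (Ai *v Z $ n)))) (at Z)"
      using has_derivative_compose[OF dq psi_deriv[OF d, unfolded has_field_derivative_def]]
      by (simp add: iA)
  qed
  have alg: "(\<lambda>H. \<Sum>n\<in>UNIV. psi' \<delta> (Z $ n \<bullet> (Ai *v Z $ n)) *
           (Z $ n \<bullet> (Ai *v H $ n + (- (Ai ** (transpose Z ** H + transpose H ** Z) ** Ai)) *v Z $ n)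
            + H $ n \<bullet> (Ai *v Z $ n)))
      = (\<lambda>H. ((mat 1 - U ** transpose U) ** D_huber \<delta> (U ** V) ** U ** matrix_inv \<Lambda> ** V) \<bullet> H)"
    unfolding iL by (rule ext, rule algebra_core[OF d UtU dL pL VtV VVt Zdef Li_def Ai_def])
  show ?thesis
    using has_derivative_transform_within_open[OF has_derivative_eq_rhs[OF dG alg] oO ZO FG] by simp
qed


end
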